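(* Let $\delta\geq 6$ be an integer of the form $\delta=4k+2$ with $k$ a positive integer. Then there does not exist a positive odd integer $n$ with the property that there exist positive integers $d_1, d_2$, each dividing $\frac{n^2+1}{2}$, such that $d_1+d_2=\delta n$. *)

theory Defs
  imports Main
begin

end

theory Submission
  imports Defs
begin

lemma vieta:
  fixes e c :: int
  assumes e2: "e \<ge> 2" and cb: "2*e^2 \<le> c + 2"
  shows "0<x \<Longrightarrow> 0<y \<Longrightarrow> x^2+y^2+e^2 = c*x*y \<Longrightarrow> c = e^2+2"
proof (induction "nat (x+y)" arbitrary: x y rule: less_induct)
  case less
  have gen: "c = e^2+2" if xy: "y \<le> x" "0<x" "0<y" "x^2+y^2+e^2 = c*x*y"
     and IH: "\<And>x' y'. nat (x'+y') < nat (x+y) \<Longrightarrow> 0<x' \<Longrightarrow> 0<y' \<Longrightarrow> x'^2+y'^2+e^2 = c*x'*y' \<Longrightarrow> c = e^2+2"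
     for x y
  proof (cases "x^2 > y^2 + e^2")
    case True
    define x' where "x' = c*y - x"
    have eq: "x * x' = y^2 + e^2" using xy(4) unfolding x'_def by (simp add: algebra_simps power2_eq_square)
    have pos: "y^2+e^2 > 0" using xy by (simp add: add_pos_nonneg)
    have x'pos: "x' > 0" using eq pos xy(2) by (metis zero_less_mult_pos)
    have "x * x' < x * x" using eq True by (simp add: power2_eq_square)
    hence "x' < x" using xy(2) by simp
    have "x'^2 + y^2 + e^2 = c*x'*y" unfolding x'_def using xy(4) by (simp add: algebra_simps power2_eq_square)
    thus ?thesis using IH[of x' y] x'pos xy \<open>x' < x\<close> by simp
  next
    case False
    hence le: "x^2 + y^2 + e^2 \<le> 2*y^2 + 2*e^2" by simp
    have "(2::int)^2 \<le> e^2" by (rule power_mono) (use e2 in auto)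
    hence e4: "e^2 \<ge> 4" by simp
    have cpos: "c \<ge> 0" using cb e4 by linarith
    show ?thesis
    proof (cases "y \<ge> 2")
      case True
      have "c*y*y \<le> c*x*y" using xy cpos by (simp add: mult_right_mono mult_left_mono)
      hence A: "c*y^2 \<le> 2*y^2 + 2*e^2" using le xy(4) by (simp add: power2_eq_square)
      have "(2*e^2-2)*y^2 \<le> c*y^2" using cb by (intro mult_right_mono) auto
      hence "(2*e^2-4)*y^2 \<le> 2*e^2" using A by (simp add: algebra_simps)
      moreover have "(2::int)^2 \<le> y^2" by (rule power_mono) (use True in auto)
      hence "(2*e^2-4)*4 \<le> (2*e^2-4)*y^2"
        using e4 by (intro mult_left_mono) auto
      moreover have "(2*e^2-4)*4 = 8*e^2-16" by simp
      ultimately show ?thesis using e4 by linarith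
    next
      case False
      hence y1: "y = 1" using xy by simp
      show ?thesis
      proof (cases "x \<ge> 2")
        case True
        have "c*2 \<le> c*x" using True cpos by (simp add: mult_left_mono)
        hence "c*2 \<le> 2 + 2*e^2" using le xy(4) y1 by simp
        thus ?thesis using cb e4 by linarith
      next
        case False
        hence "x = 1" using xy by simp
        thus ?thesis using xy(4) y1 by simp
      qed
    qed
  qed
  show ?case
  proof (cases "y \<le> x")
    case True
    show ?thesis by (rule gen[OF True less.prems]) (rule less.hyps, auto)
  next
    case False
    have s: "y^2+x^2+e^2 = c*y*x" using less.prems(3) by (simp add: algebra_simps)
    show ?thesis
      by (rule gen[of x y, OF _ less.prems(2) less.prems(1) s]; (rule less.hyps)?) (use False in auto)
  qed
qed

theorem theorem3:
  fixes \<delta> k :: nat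
  assumes "k > 0" and "\<delta> = 4 * k + 2"
  shows "\<not> (\<exists>n::nat. n > 0 \<and> odd n \<and>
            (\<exists>d1 d2 :: nat. d1 > 0 \<and> d2 > 0 \<and>
               d1 dvd ((n^2 + 1) div 2) \<and> d2 dvd ((n^2 + 1) div 2) \<and>
               d1 + d2 = \<delta> * n))"
proof
  assume "\<exists>n::nat. n > 0 \<and> odd n \<and>
            (\<exists>d1 d2 :: nat. d1 > 0 \<and> d2 > 0 \<and>
               d1 dvd ((n^2 + 1) div 2) \<and> d2 dvd ((n^2 + 1) div 2) \<and>
               d1 + d2 = \<delta> * n)"
  then obtain n d1 d2 where n: "n > 0" "odd n" and d: "d1 > 0" "d2 > 0"
    "d1 dvd ((n^2 + 1) div 2)" "d2 dvd ((n^2 + 1) div 2)" "d1 + d2 = \<delta> * n" by blast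
  define N where "N = (n^2+1) div 2"
  obtain j where j: "n = 2*j+1" using n(2) oddE by blast
  have N2: "2*N = n^2+1" unfolding N_def j by (simp add: power2_eq_square algebra_simps)
  have Nodd: "odd N" proof -
    have "N = 2*(j*j+j)+1" using N2 unfolding j by (simp add: power2_eq_square algebra_simps)
    thus ?thesis by simp
  qed
  define g where "g = gcd d1 d2"
  have gpos: "g > 0" unfolding g_def using d by simp
  obtain a b where ab: "d1 = a*g" "d2 = b*g" "coprime a b"
    using gcd_coprime_exists[of d1 d2] gpos unfolding g_def by auto
  have "lcm d1 d2 dvd N" using d unfolding N_def by (simp add: lcm_least)
  moreover have "lcm d1 d2 = g*(a*b)" unfolding ab
    using ab(3) by (simp add: lcm_mult_left lcm_coprime mult.commute[of _ g])
  ultimately obtain m where m: "N = g*(a*b)*m" by (auto elim: dvdE)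
  have gN: "g dvd N" using m by simp
  have cop: "coprime g n"
  proof (rule coprimeI)
    fix c assume c1: "c dvd g" and c2: "c dvd n"
    have "c dvd n^2+1" using c1 gN N2 by (metis dvd_trans dvd_triv_right)
    moreover have "c dvd n^2" using c2 by (simp add: power2_eq_square)
    ultimately have "c dvd 1" by (metis dvd_add_right_iff)
    thus "is_unit c" by simp
  qed
  have "g dvd \<delta> * n" using d(5) unfolding ab by (metis dvd_add dvd_triv_right)
  hence "g dvd \<delta>" using cop by (simp add: coprime_dvd_mult_left_iff)
  then obtain e where e: "\<delta> = g*e" by (auto elim: dvdE)
  have godd: "odd g" using gN Nodd by (metis dvd_trans)
  have "even \<delta>" using assms(2) by simp
  hence eeven: "even e" using godd e by simp
  have epos: "e > 0" using e assms(2) by (metis add_gr_0 mult_is_0 neq0_conv zero_less_numeral)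
  have e2: "e \<ge> 2" using eeven epos by presburger
  have "g*(a+b) = g*(e*n)" using d(5) unfolding ab e by (simp add: algebra_simps)
  hence abn: "a+b = e*n" using gpos by simp
  have apos: "a > 0" and bpos: "b > 0" using d ab by auto
  have mpos: "m > 0" using m Nodd by (metis mult_0_right odd_pos neq0_conv)
  define A B E C where "A = int a" "B = int b" "E = int e"
     "C = 2 * int g * E^2 * int m - 2"
  have N2i: "2 * int g * A * B * int m = (int n)^2 + 1"
    using N2 m unfolding A_B_E_C_def by (metis (mono_tags) of_nat_add of_nat_mult of_nat_power of_nat_1 of_nat_numeral mult.assoc)
  have abni: "A + B = E * int n" using abn unfolding A_B_E_C_def by (metis of_nat_add of_nat_mult)
  have "(A+B)^2 = E^2 * (int n)^2" using abni by (simp add: power_mult_distrib)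
  also have "... = E^2 * (2 * int g * A * B * int m - 1)" using N2i by simp
  finally have eqn: "A^2 + B^2 + E^2 = C*A*B" unfolding A_B_E_C_def(4)
    by (simp add: algebra_simps power2_eq_square)
  have E2: "E \<ge> 2" using e2 unfolding A_B_E_C_def by simp
  have gm1: "int g * int m \<ge> 1" using gpos mpos by (metis of_nat_mult of_nat_0_less_iff int_one_le_iff_zero_less mult_pos_pos)
  have "E^2 * 1 \<le> E^2 * (int g * int m)" using gm1 by (intro mult_left_mono) auto
  hence Cb: "2*E^2 \<le> C + 2" unfolding A_B_E_C_def(4) by (simp add: algebra_simps)
  have "C = E^2 + 2" using vieta[OF E2 Cb, of A B] eqn apos bpos unfolding A_B_E_C_def by simp
  hence key: "E^2 * (2 * (int g * int m) - 1) = 4" unfolding A_B_E_C_def(4) by (simp add: algebra_simps)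
  have "(2::int)^2 \<le> E^2" by (rule power_mono) (use E2 in auto)
  hence E4: "E^2 \<ge> 4" by simp
  have gm: "int g * int m = 1"
  proof (rule ccontr)
    assume "int g * int m \<noteq> 1"
    hence "int g * int m \<ge> 2" using gm1 by simp
    hence "E^2 * 3 \<le> E^2 * (2 * (int g * int m) - 1)" using E4 by (intro mult_left_mono) auto
    thus False using key E4 by linarith
  qed
  hence "int (g * m) = 1" by simp
  hence "g * m = 1" by linarith
  hence "g = 1" by simp
  moreover have "E^2 = 4" using key gm by simp
  hence "E^2 = 2^2" by simp
  hence "E = 2" using E2 power2_eq_iff_nonneg[of E 2] by linarith
  hence "e = 2" unfolding A_B_E_C_def by simp
  ultimately have "\<delta> = 2" using e by simp
  thus False using assms by simp
qed

end
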